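(* Let $A\in\mathbb{C}^{m\times m}$ and $C\in\mathbb{C}^{n\times n}$ be nonsingular, $B\in\mathbb{C}^{m\times n}$, and $M=ABC$. Then: (e) For each type $\tau\in\{(1),(1,2),(1,4),(1,2,4)\}$ there exists $G\in\{B^{\tau}\}$ with $M^*MC^{-1}GA^{-1}=M^*$. (f) For each type $\tau\in\{(1),(1,2),(1,4),(1,2,4)\}$: $M^*MC^{-1}GA^{-1}=M^*$ holds for all $G\in\{B^{\tau}\}$ if and only if $B=0$ or $r(B)=m$. (g) For each type $\tau\in\{(1,3),(1,2,3),(1,3,4)\}$: $M^*MC^{-1}GA^{-1}=M^*$ holds for all (equivalently, for some) $G\in\{B^{\tau}\}$ if and only if $\mathscr{R}(A^*AB)=\mathscr{R}(B)$; likewise $M^*MC^{-1}B^\dagger A^{-1}=M^*$ if and only if $\mathscr{R}(A^*AB)=\mathscr{R}(B)$. (h) For each type $\tau\in\{(1),(1,2),(1,4),(1,2,4)\}$: $B^*BCHA=B^*$ holds for all $H\in\{M^{\tau}\}$ if and only if $B=0$ or $r(B)=m$. (i) For each type $\tau\in\{(1,3),(1,2,3),(1,3,4)\}$: $B^*BCHA=B^*$ holds for all $H\in\{M^{\tau}\}$ if and only if $\mathscr{R}(A^*AB)=\mathscr{R}(B)$; likewise $B^*BCM^\dagger A=B^*$ if and only if $\mathscr{R}(A^*AB)=\mathscr{R}(B)$.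
   Context: For a complex matrix $X$, $X^*$ is its conjugate transpose, $r(X)$ its rank and $\mathscr{R}(X)$ its column space. For $X\in\mathbb{C}^{p\times q}$, a matrix $G\in\mathbb{C}^{q\times p}$ is called an $\{i,\ldots,j\}$-generalized inverse of $X$ (written $X^{(i,\ldots,j)}$) if it satisfies the equations numbered $i,\ldots,j$ among the four Penrose equations (i) $XGX=X$, (ii) $GXG=G$, (iii) $(XG)^*=XG$, (iv) $(GX)^*=GX$; $\{X^{(i,\ldots,j)}\}$ denotes the set of all such $G$. The Moore–Penrose inverse $X^\dagger$ is the unique matrix satisfying all four equations. *)

theory Defs
  imports Complex_Main "Jordan_Normal_Form.Schur_Decomposition" "Jordan_Normal_Form.DL_Rank"
begin

text \<open>Conjugate transpose: mat_adjoint (Jordan_Normal_Form). Inverse of a nonsingular square matrix.\<close>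

definition minv :: "complex mat \<Rightarrow> complex mat" where
  "minv A = (THE X. X \<in> carrier_mat (dim_row A) (dim_row A) \<and>
                    A * X = 1\<^sub>m (dim_row A) \<and> X * A = 1\<^sub>m (dim_row A))"

definition penrose :: "nat \<Rightarrow> complex mat \<Rightarrow> complex mat \<Rightarrow> bool" where
  "penrose i X G = (if i = 1 then X * G * X = X
                    else if i = 2 then G * X * G = G
                    else if i = 3 then mat_adjoint (X * G) = X * G
                    else if i = 4 then mat_adjoint (G * X) = G * X
                    else True)"

definition ginv_set :: "complex mat \<Rightarrow> nat set \<Rightarrow> complex mat set" where
  "ginv_set X S = {G \<in> carrier_mat (dim_col X) (dim_row X). \<forall>i\<in>S. penrose i X G}"

definition moore_penrose :: "complex mat \<Rightarrow> complex mat" where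
  "moore_penrose X = (THE G. G \<in> ginv_set X {1,2,3,4})"

definition col_range :: "complex mat \<Rightarrow> complex vec set" where
  "col_range X = {X *\<^sub>v v | v. v \<in> carrier_vec (dim_col X)}"

definition mrank :: "complex mat \<Rightarrow> nat" where
  "mrank X = vec_space.rank (dim_row X) X"

end

theory Submission
  imports Defs
begin


abbreviation adj :: "complex mat \<Rightarrow> complex mat" where "adj \<equiv> mat_adjoint"

lemma adj_dims[simp]: "dim_row (adj A) = dim_col A" "dim_col (adj A) = dim_row A"
  unfolding mat_adjoint_def by (simp_all add: mat_of_rows_def)

lemma adj_index0: "i < dim_col A \<Longrightarrow> j < dim_row A \<Longrightarrow> mat_adjoint A $$ (i,j) = conjugate (col A i) $ j"
  unfolding mat_adjoint_def by (subst mat_of_rows_index, simp_all)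

lemma adj_index[simp]: "i < dim_col A \<Longrightarrow> j < dim_row A \<Longrightarrow> adj A $$ (i,j) = cnj (A $$ (j,i))"
  by (subst adj_index0, simp_all)

lemma adj_carrier[simp]: "A \<in> carrier_mat p q \<Longrightarrow> adj A \<in> carrier_mat q p"
  by (intro carrier_matI, auto)

lemma adj_adj[simp]: "adj (adj A) = A"
  by (rule eq_matI, auto)

lemma adj_inj: "adj A = adj B \<Longrightarrow> A = B"
  by (metis adj_adj)

lemma adj_mult: assumes "A \<in> carrier_mat p q" "B \<in> carrier_mat q r"
  shows "adj (A * B) = adj B * adj A"
proof (rule eq_matI)
  fix i j assume ij: "i < dim_row (adj B * adj A)" "j < dim_col (adj B * adj A)"
  have "adj (A * B) $$ (i,j) = cnj (\<Sum>k<q. A $$ (j,k) * B $$ (k,i))"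
    using assms ij by (auto simp: scalar_prod_def atLeast0LessThan)
  also have "\<dots> = (\<Sum>k<q. cnj (B $$ (k,i)) * cnj (A $$ (j,k)))"
    by (simp add: mult.commute)
  also have "\<dots> = (adj B * adj A) $$ (i,j)"
    using assms ij by (auto simp: scalar_prod_def atLeast0LessThan)
  finally show "adj (A * B) $$ (i,j) = (adj B * adj A) $$ (i,j)" .
qed (use assms in auto)

lemma adj_one[simp]: "adj (1\<^sub>m n) = 1\<^sub>m n"
  by (rule eq_matI, auto)

lemma adj_zero[simp]: "adj (0\<^sub>m p q) = 0\<^sub>m q p"
  by (rule eq_matI, auto)

lemma adj_minus: assumes "A \<in> carrier_mat p q" "B \<in> carrier_mat p q"
  shows "adj (A - B) = adj A - adj B"
  by (rule eq_matI, insert assms, auto)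

lemma adj_add: assumes "A \<in> carrier_mat p q" "B \<in> carrier_mat p q"
  shows "adj (A + B) = adj A + adj B"
  by (rule eq_matI, insert assms, auto)


lemma adj_self_zero: assumes X: "X \<in> carrier_mat p q" and Z: "adj X * X = 0\<^sub>m q q"
  shows "X = 0\<^sub>m p q"
proof (rule eq_matI)
  fix i j assume i: "i < dim_row (0\<^sub>m p q :: complex mat)" and j: "j < dim_col (0\<^sub>m p q :: complex mat)"
  have "(adj X * X) $$ (j,j) = (\<Sum>k<p. cnj (X $$ (k,j)) * X $$ (k,j))"
    using X i j by (auto simp: scalar_prod_def atLeast0LessThan)
  also have "\<dots> = of_real (\<Sum>k<p. (cmod (X $$ (k,j)))^2)"
    unfolding of_real_sum by (intro sum.cong refl, simp add: complex_mult_cnj mult.commute cmod_power2)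
  finally have "of_real (\<Sum>k<p. (cmod (X $$ (k,j)))^2) = (0::complex)" using Z j by simp
  hence "(\<Sum>k<p. (cmod (X $$ (k,j)))^2) = 0" by (simp only: of_real_eq_0_iff)
  hence "(cmod (X $$ (i,j)))^2 = 0"
    using sum_nonneg_eq_0_iff[of "{..<p}" "\<lambda>k. (cmod (X $$ (k,j)))^2"] i by auto
  thus "X $$ (i,j) = 0\<^sub>m p q $$ (i,j)" using i j by auto
qed (use X in auto)


lemma adj_self_zero_iff: assumes X: "X \<in> carrier_mat p q"
  shows "adj X * X = 0\<^sub>m q q \<longleftrightarrow> X = 0\<^sub>m p q"
  using adj_self_zero[OF X] X by auto

lemma massoc: fixes A B C :: "'a::semiring_0 mat"
  assumes "dim_col A = dim_row B" "dim_col B = dim_row C"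
  shows "A * B * C = A * (B * C)"
  by (rule assoc_mult_mat[of A "dim_row A" "dim_col A" B "dim_col B" C "dim_col C"], insert assms, auto intro: carrier_matI)

lemma invertible_inv: assumes A: "A \<in> carrier_mat m m" and inv: "invertible_mat A"
  shows "\<exists>B \<in> carrier_mat m m. A * B = 1\<^sub>m m \<and> B * A = 1\<^sub>m m"
proof -
  from inv obtain B where AB: "A * B = 1\<^sub>m (dim_row A)" and BA: "B * A = 1\<^sub>m (dim_row B)"
    unfolding invertible_mat_def inverts_mat_def by blast
  have "dim_col B = m" using arg_cong[OF AB, of dim_col] A by auto
  moreover have "dim_row B = m" using arg_cong[OF BA, of dim_col] A by auto
  ultimately show ?thesis using AB BA A by (intro bexI[of _ B], auto intro: carrier_matI)
qed

lemma minv: assumes A: "A \<in> carrier_mat m m" and inv: "invertible_mat A"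
  shows "minv A \<in> carrier_mat m m" "A * minv A = 1\<^sub>m m" "minv A * A = 1\<^sub>m m"
proof -
  obtain B where B: "B \<in> carrier_mat m m" "A * B = 1\<^sub>m m" "B * A = 1\<^sub>m m"
    using invertible_inv[OF A inv] by blast
  have uniq: "X = B" if X: "X \<in> carrier_mat m m" "A * X = 1\<^sub>m m" "X * A = 1\<^sub>m m" for X
  proof -
    have "X = X * (A * B)" using X B by simp
    also have "\<dots> = (X * A) * B" by (rule assoc_mult_mat[symmetric, OF X(1) A B(1)])
    also have "\<dots> = B" using X B by simp
    finally show ?thesis .
  qed
  have "minv A = B" unfolding minv_def using A B
    by (intro the_equality, auto intro: uniq)
  thus "minv A \<in> carrier_mat m m" "A * minv A = 1\<^sub>m m" "minv A * A = 1\<^sub>m m" using B by auto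
qed

lemma ginv1_exists: fixes X :: "complex mat" assumes X: "X \<in> carrier_mat p q"
  shows "\<exists>G \<in> carrier_mat q p. X * G * X = X"
proof -
  define C where "C = gauss_jordan_single X"
  note gj = gauss_jordan_single[OF X C_def[symmetric]]
  from gj(4) obtain P Q where P: "P \<in> carrier_mat p p" and Q: "Q \<in> carrier_mat p p"
    and CPX: "C = P * X" and QP: "Q * P = 1\<^sub>m p" by blast
  have C: "C \<in> carrier_mat p q" by (rule gj(2))
  from gj(3) obtain f where piv: "pivot_fun C f (dim_col C)" unfolding row_echelon_form_def by blast
  hence piv: "pivot_fun C f q" using C by simp
  have dC: "dim_row C = p" using C by auto
  note pd = pivot_funD[OF dC piv]
  define G0 :: "complex mat" where "G0 = mat q p (\<lambda>(j,i). if f i < q \<and> j = f i then 1 else 0)"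
  have G0: "G0 \<in> carrier_mat q p" unfolding G0_def by simp
  have CG0: "C * G0 = mat p p (\<lambda>(i,i'). if i = i' \<and> f i < q then 1 else 0)"
  proof (rule eq_matI)
    fix i i' assume i: "i < dim_row (mat p p (\<lambda>(i,i'). if i = i' \<and> f i < q then 1 else (0::complex)))"
      and i': "i' < dim_col (mat p p (\<lambda>(i,i'). if i = i' \<and> f i < q then 1 else (0::complex)))"
    hence i: "i < p" and i': "i' < p" by auto
    have "(C * G0) $$ (i,i') = (\<Sum>j\<in>{0..<q}. C $$ (i,j) * (if f i' < q \<and> j = f i' then 1 else 0))"
      using C G0 i i' by (simp add: scalar_prod_def G0_def)
    also have "\<dots> = (\<Sum>j\<in>{0..<q}. if j = f i' then (if f i' < q then C $$ (i, f i') else 0) else 0)"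
      by (rule sum.cong, auto)
    also have "\<dots> = (if f i' < q then C $$ (i, f i') else 0)"
      by (simp add: sum.delta)
    also have "\<dots> = (if i = i' \<and> f i < q then 1 else 0)"
      using pd(4)[OF i'] pd(5)[OF i' _ i] by auto
    finally show "(C * G0) $$ (i,i') = mat p p (\<lambda>(i,i'). if i = i' \<and> f i < q then 1 else 0) $$ (i,i')"
      using i i' by simp
  qed (use C G0 in auto)
  have CGC: "C * G0 * C = C"
  proof (rule eq_matI)
    fix i k assume i: "i < dim_row C" and k: "k < dim_col C"
    hence i: "i < p" and k: "k < q" using C by auto
    have "(C * G0 * C) $$ (i,k) = (\<Sum>i'\<in>{0..<p}. (if i = i' \<and> f i < q then 1 else 0) * C $$ (i',k))"
      unfolding CG0 using C i k by (simp add: scalar_prod_def)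
    also have "\<dots> = (\<Sum>i'\<in>{0..<p}. if i' = i then (if f i < q then C $$ (i,k) else 0) else 0)"
      by (rule sum.cong, auto)
    also have "\<dots> = (if f i < q then C $$ (i,k) else 0)"
      using i by (simp add: sum.delta)
    also have "\<dots> = C $$ (i,k)"
      using pd(1)[OF i] pd(2)[OF i, of k] k by (cases "f i < q", auto)
    finally show "(C * G0 * C) $$ (i,k) = C $$ (i,k)" .
  qed (use C G0 in auto)
  have XQC: "X = Q * C"
  proof -
    have "X = (Q * P) * X" using QP X by simp
    also have "\<dots> = Q * (P * X)" using Q P X by (simp add: massoc carrier_matD)
    finally show ?thesis using CPX by simp
  qed
  define G where "G = G0 * P"
  have "X * G * X = X * G0 * (P * X)" unfolding G_def using X G0 P by (simp add: massoc carrier_matD)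
  also have "\<dots> = Q * C * G0 * C" unfolding CPX[symmetric] by (subst XQC, rule refl)
  also have "\<dots> = Q * (C * G0 * C)" using Q C G0 by (simp add: massoc carrier_matD)
  also have "\<dots> = X" using CGC XQC by simp
  finally show ?thesis using G0 P unfolding G_def by (intro bexI[of _ "G0 * P"], auto)
qed



lemma mdist_l: fixes A B C :: "'a::ring mat"
  assumes "dim_col A = dim_row B" "dim_row B = dim_row C" "dim_col B = dim_col C"
  shows "A * (B - C) = A * B - A * C"
  by (rule mult_minus_distrib_mat[of A "dim_row A" "dim_col A" B "dim_col B" C], insert assms, auto intro: carrier_matI)

lemma mdist_r: fixes A B C :: "'a::ring mat"
  assumes "dim_col A = dim_row C" "dim_row A = dim_row B" "dim_col A = dim_col B"
  shows "(A - B) * C = A * C - B * C"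
  by (rule minus_mult_distrib_mat[of A "dim_row A" "dim_col A" B C "dim_col C"], insert assms, auto intro: carrier_matI)

lemma minus_zero_eq: fixes A B :: "complex mat"
  assumes "A \<in> carrier_mat p q" "B \<in> carrier_mat p q" "A - B = 0\<^sub>m p q"
  shows "A = B"
proof (rule eq_matI)
  fix i j assume "i < dim_row B" "j < dim_col B"
  thus "A $$ (i,j) = B $$ (i,j)" using assms(1,2) arg_cong[OF assms(3), of "\<lambda>M. M $$ (i,j)"] by auto
qed (use assms in auto)

lemma adj_minus': fixes A B :: "complex mat"
  assumes "dim_row A = dim_row B" "dim_col A = dim_col B"
  shows "adj (A - B) = adj A - adj B"
  by (rule eq_matI, insert assms, auto)

lemma adj_mult': fixes A B :: "complex mat" assumes "dim_col A = dim_row B"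
  shows "adj (A * B) = adj B * adj A"
  by (rule adj_mult[of A "dim_row A" "dim_col A" B "dim_col B"], insert assms, auto intro: carrier_matI)

lemma mminus_self[simp]: fixes A :: "'a::ab_group_add mat" shows "A - A = 0\<^sub>m (dim_row A) (dim_col A)"
  by (rule eq_matI, auto)

lemmas msimps = massoc carrier_matD adj_mult'

lemma ginv_H: fixes X H1 :: "complex mat"
  assumes X: "X \<in> carrier_mat p q" and H1: "H1 \<in> carrier_mat q q"
    and g: "adj X * X * H1 * (adj X * X) = adj X * X"
  shows "X * H1 * (adj X * X) = X"
proof -
  define H where "H = adj X * X"
  have H: "H \<in> carrier_mat q q" unfolding H_def using X by auto
  define D where "D = X * H1 * H - X"
  have D: "D \<in> carrier_mat p q" unfolding D_def using X H1 H by auto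
  have "adj X * D = adj X * (X * H1 * H) - adj X * X"
    unfolding D_def using X H1 H by (simp add: mdist_l)
  also have "adj X * (X * H1 * H) = H * H1 * H" unfolding H_def using X H1 by (simp add: msimps)
  also have "\<dots> = H" using g unfolding H_def .
  finally have XD: "adj X * D = 0\<^sub>m q q" unfolding H_def using X by simp
  have "adj D = adj (X * H1 * H) - adj X" unfolding D_def using X H1 H by (simp add: adj_minus')
  also have "adj (X * H1 * H) = H * adj H1 * adj X"
    using X H1 H by (simp add: msimps H_def)
  finally have "adj D = H * adj H1 * adj X - adj X" .
  hence "adj D * D = (H * adj H1 * adj X) * D - adj X * D"
    using X H1 H D by (simp add: mdist_r)
  also have "\<dots> = 0\<^sub>m q q" using XD X H1 H D by (simp add: msimps)
  finally have "D = 0\<^sub>m p q" using adj_self_zero[OF D] by simp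
  hence e: "X * H1 * H - X = 0\<^sub>m p q" unfolding D_def .
  have "X * H1 * H \<in> carrier_mat p q" using X H1 H by simp
  from minus_zero_eq[OF this X e] show ?thesis unfolding H_def .
qed


lemma adj_H[simp]: "adj (adj X * X) = adj X * X"
  by (simp add: adj_mult')

lemma ginv13_exists: fixes X :: "complex mat" assumes X: "X \<in> carrier_mat p q"
  shows "\<exists>Y \<in> carrier_mat q p. X * Y * X = X \<and> adj (X * Y) = X * Y"
proof -
  define H where "H = adj X * X"
  have H: "H \<in> carrier_mat q q" unfolding H_def using X by auto
  have aH: "adj H = H" unfolding H_def by simp
  obtain H1 where H1: "H1 \<in> carrier_mat q q" and g1: "H * H1 * H = H"
    using ginv1_exists[OF H] by blast
  have g2: "H * adj H1 * H = H"
  proof -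
    have "adj (H * H1 * H) = H * adj H1 * H" using H H1 aH by (simp add: msimps)
    thus ?thesis using g1 aH by simp
  qed
  have e1: "X * H1 * H = X" using ginv_H[OF X H1 g1[unfolded H_def]] unfolding H_def .
  have e2: "X * adj H1 * H = X" using ginv_H[OF X _ g2[unfolded H_def]] H1 unfolding H_def by simp
  have e3: "H * H1 * adj X = adj X"
  proof -
    have "adj (X * adj H1 * H) = H * H1 * adj X" using X H1 H aH by (simp add: msimps)
    thus ?thesis using e2 by simp
  qed
  define Y where "Y = H1 * adj X"
  have Y: "Y \<in> carrier_mat q p" unfolding Y_def using H1 X by simp
  have "X * Y * X = X * H1 * H" unfolding Y_def H_def using X H1 by (simp add: msimps)
  also have "\<dots> = X" by (rule e1)
  finally have 1: "X * Y * X = X" .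
  have "adj (X * Y) = X * adj H1 * adj X" unfolding Y_def using X H1 by (simp add: msimps)
  also have "\<dots> = X * adj H1 * (H * H1 * adj X)" using e3 by simp
  also have "\<dots> = (X * adj H1 * H) * H1 * adj X" using X H1 H by (simp add: msimps)
  also have "\<dots> = X * Y" unfolding e2 Y_def using X H1 by (simp add: msimps)
  finally have 2: "adj (X * Y) = X * Y" .
  show ?thesis using 1 2 Y by blast
qed

lemma ginv14_exists: fixes X :: "complex mat" assumes X: "X \<in> carrier_mat p q"
  shows "\<exists>Z \<in> carrier_mat q p. X * Z * X = X \<and> adj (Z * X) = Z * X"
proof -
  have aX: "adj X \<in> carrier_mat q p" using X by simp
  obtain Y where Y: "Y \<in> carrier_mat p q" and 1: "adj X * Y * adj X = adj X"
    and 2: "adj (adj X * Y) = adj X * Y" using ginv13_exists[OF aX] by blast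
  have "X * adj Y * X = adj (adj X * Y * adj X)" using X Y by (simp add: msimps)
  also have "\<dots> = X" using 1 by simp
  finally have a: "X * adj Y * X = X" .
  have b0: "adj Y * X = adj (adj X * Y)" using X Y by (simp add: msimps)
  have "adj (adj Y * X) = adj X * Y" using X Y by (simp add: msimps)
  also have "\<dots> = adj Y * X" using b0 2 by simp
  finally have b: "adj (adj Y * X) = adj Y * X" .
  show ?thesis using a b Y by (intro bexI[of _ "adj Y"], auto)
qed

lemma mem_ginv_set: "G \<in> ginv_set X S \<longleftrightarrow> G \<in> carrier_mat (dim_col X) (dim_row X) \<and> (\<forall>i\<in>S. penrose i X G)"
  unfolding ginv_set_def by blast

lemma penrose_simps[simp]: "penrose 1 X G = (X * G * X = X)" "penrose (Suc 0) X G = (X * G * X = X)" "penrose 2 X G = (G * X * G = G)"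
  "penrose 3 X G = (mat_adjoint (X * G) = X * G)" "penrose 4 X G = (mat_adjoint (G * X) = G * X)"
  unfolding penrose_def by simp_all

lemma mp_exists: fixes X :: "complex mat" assumes X: "X \<in> carrier_mat p q"
  shows "\<exists>G. G \<in> ginv_set X {1,2,3,4}"
proof -
  obtain Y where Y: "Y \<in> carrier_mat q p" and y1: "X * Y * X = X" and y3: "adj (X * Y) = X * Y"
    using ginv13_exists[OF X] by blast
  obtain Z where Z: "Z \<in> carrier_mat q p" and z1: "X * Z * X = X" and z4: "adj (Z * X) = Z * X"
    using ginv14_exists[OF X] by blast
  define G where "G = Z * X * Y"
  have G: "G \<in> carrier_mat q p" unfolding G_def using X Y Z by simp
  have y1': "X * (Y * X) = X" using y1 X Y by (simp add: msimps)
  have z1': "X * (Z * X) = X" using z1 X Z by (simp add: msimps)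
  have z1'': "X * (Z * (X * A)) = X * A" if "A \<in> carrier_mat q r" for A r
  proof -
    have "X * (Z * (X * A)) = X * (Z * X) * A" using X Z that by (simp add: msimps)
    thus ?thesis using z1' by simp
  qed
  have 1: "X * G * X = X" unfolding G_def using X Y Z y1' z1'' by (simp add: msimps)
  have 2: "G * X * G = G" unfolding G_def using X Y Z y1' z1'' by (simp add: msimps)
  have 3: "adj (X * G) = X * G"
  proof -
    have "X * G = X * Y" unfolding G_def using X Y Z z1'' by (simp add: msimps)
    thus ?thesis using y3 by simp
  qed
  have 4: "adj (G * X) = G * X"
  proof -
    have "G * X = Z * X" unfolding G_def using X Y Z y1' by (simp add: msimps)
    thus ?thesis using z4 by simp
  qed
  show ?thesis using G X 1 2 3 4 by (intro exI[of _ G], simp add: mem_ginv_set)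
qed


lemma mp_unique: fixes X :: "complex mat" assumes X: "X \<in> carrier_mat p q"
  and G1: "G1 \<in> ginv_set X {1,2,3,4}" and G2: "G2 \<in> ginv_set X {1,2,3,4}"
  shows "G1 = G2"
proof -
  have c1: "G1 \<in> carrier_mat q p" and a1: "X * G1 * X = X" and b1: "G1 * X * G1 = G1"
    and h1: "adj (X * G1) = X * G1" and k1: "adj (G1 * X) = G1 * X"
    using G1 X by (auto simp: mem_ginv_set)
  have c2: "G2 \<in> carrier_mat q p" and a2: "X * G2 * X = X" and b2: "G2 * X * G2 = G2"
    and h2: "adj (X * G2) = X * G2" and k2: "adj (G2 * X) = G2 * X"
    using G2 X by (auto simp: mem_ginv_set)
  have aX2: "adj X * adj G2 * adj X = adj X"
  proof -
    have "adj (X * G2 * X) = adj X * adj G2 * adj X" using X c2 by (simp add: msimps)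
    thus ?thesis using a2 by simp
  qed
  have aX1: "adj X * adj G1 * adj X = adj X"
  proof -
    have "adj (X * G1 * X) = adj X * adj G1 * adj X" using X c1 by (simp add: msimps)
    thus ?thesis using a1 by simp
  qed
  have "G1 = G1 * (X * G1)" using b1 X c1 by (simp add: msimps)
  also have "\<dots> = G1 * (adj G1 * adj X)" using h1 X c1 by (simp add: adj_mult')
  also have "\<dots> = G1 * (adj G1 * (adj X * adj G2 * adj X))" using aX2 by simp
  also have "\<dots> = (G1 * (adj G1 * adj X)) * (adj G2 * adj X)" using X c1 c2 by (simp add: msimps)
  also have "\<dots> = (G1 * (X * G1)) * (X * G2)" using X c1 c2 h1 h2 by (simp add: adj_mult')
  also have "\<dots> = (G1 * X * G1) * (X * G2)" using X c1 c2 by (simp add: msimps)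
  also have "\<dots> = G1 * (X * G2)" using b1 by simp
  finally have e1: "G1 = G1 * (X * G2)" .
  have "G2 = (G2 * X) * G2" using b2 by simp
  also have "\<dots> = (adj X * adj G2) * G2" using k2 X c2 by (simp add: adj_mult')
  also have "\<dots> = ((adj X * adj G1 * adj X) * adj G2) * G2" using aX1 by simp
  also have "\<dots> = (adj X * adj G1) * (adj X * adj G2) * G2" using X c1 c2 by (simp add: msimps)
  also have "\<dots> = (G1 * X) * (G2 * X) * G2" using X c1 c2 k1 k2 by (simp add: adj_mult')
  also have "\<dots> = G1 * X * (G2 * X * G2)" using X c1 c2 by (simp add: msimps)
  also have "\<dots> = G1 * X * G2" using b2 by simp
  also have "\<dots> = G1 * (X * G2)" using X c1 c2 by (simp add: msimps)
  finally show ?thesis using e1 by simp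
qed

lemma mp: fixes X :: "complex mat" assumes X: "X \<in> carrier_mat p q"
  shows "moore_penrose X \<in> ginv_set X {1,2,3,4}"
proof -
  obtain G where G: "G \<in> ginv_set X {1,2,3,4}" using mp_exists[OF X] by blast
  show ?thesis unfolding moore_penrose_def
    by (rule theI[of _ G], rule G, rule mp_unique[OF X _ G], assumption)
qed



context vec_space begin

lemma rank_full_span: assumes X: "X \<in> carrier_mat n nc"
  shows "rank X = n \<longleftrightarrow> span (set (cols X)) = carrier_vec n"
proof -
  let ?S = "set (cols X)"
  have dX: "dim_row X = n" using X by auto
  have S: "?S \<subseteq> carrier_vec n" using cols_dim[of X] unfolding dX by simp
  have fS: "finite ?S" by simp
  have S': "?S \<subseteq> carrier V" using S by simp
  have sub: "VectorSpace.subspace class_ring (span ?S) V" using span_is_subspace[OF S] .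
  have W: "vectorspace class_ring (vs (span ?S))" using subspace_is_vs[OF sub] .
  have fW: "vectorspace.fin_dim class_ring (vs (span ?S))" using fin_dim_span[OF fS S'] .
  show ?thesis
  proof
    assume r: "rank X = n"
    obtain b where fb: "finite b" and bb: "vectorspace.basis class_ring (vs (span ?S)) b"
      using vectorspace.finite_basis_exists[OF W fW] by blast
    have cb: "card b = n" using vectorspace.dim_basis[OF W fb bb] r unfolding rank_def by simp
    have bS: "b \<subseteq> span ?S" and lib: "LinearCombinations.module.lin_indpt class_ring (vs (span ?S)) b"
      using bb unfolding vectorspace.basis_def[OF W] by auto
    have smod: "submodule class_ring (span ?S) V" using sub unfolding VectorSpace.subspace_def by auto
    have li: "lin_indpt b" using lib span_li_not_depend(2)[OF bS smod] by simp
    have bV: "b \<subseteq> carrier_vec n" using bS span_is_subset2[OF S] by auto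
    have bV': "b \<subseteq> carrier V" using bV by simp
    have "basis b" by (rule dim_li_is_basis[OF fin_dim fb bV li], simp add: cb dim_is_n)
    hence "span b = carrier V" unfolding basis_def by auto
    moreover have "span b \<subseteq> span ?S" using span_is_subset[OF bS smod] .
    ultimately show "span ?S = carrier_vec n" using span_is_subset2[OF S] by auto
  next
    assume s: "span ?S = carrier_vec n"
    have "vs (span ?S) = V" using s by simp
    thus "rank X = n" unfolding rank_def using dim_is_n by simp
  qed
qed

end


lemma surj_iff_rinv: fixes X :: "complex mat" assumes X: "X \<in> carrier_mat m n"
  shows "(\<forall>y\<in>carrier_vec m. \<exists>x\<in>carrier_vec n. X *\<^sub>v x = y) \<longleftrightarrow> (\<exists>R \<in> carrier_mat n m. X * R = 1\<^sub>m m)"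
proof
  assume s: "\<forall>y\<in>carrier_vec m. \<exists>x\<in>carrier_vec n. X *\<^sub>v x = y"
  define c where "c = (\<lambda>i. SOME x. x \<in> carrier_vec n \<and> X *\<^sub>v x = unit_vec m i)"
  have c: "c i \<in> carrier_vec n \<and> X *\<^sub>v c i = unit_vec m i" for i
    unfolding c_def by (rule someI_ex, use s in auto)
  define R where "R = mat n m (\<lambda>(k,i). c i $ k)"
  have R: "R \<in> carrier_mat n m" unfolding R_def by simp
  have colR: "col R i = c i" if "i < m" for i
    unfolding R_def using that c[of i] by (intro eq_vecI, auto)
  have "X * R = 1\<^sub>m m"
  proof (rule eq_matI)
    fix i j assume i: "i < dim_row (1\<^sub>m m :: complex mat)" and j: "j < dim_col (1\<^sub>m m :: complex mat)"
    have "(X * R) $$ (i,j) = (X *\<^sub>v col R j) $ i" using X R i j by simp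
    also have "\<dots> = unit_vec m j $ i" using colR[of j] c[of j] j by simp
    finally show "(X * R) $$ (i,j) = 1\<^sub>m m $$ (i,j)" using i j by simp
  qed (use X R in auto)
  thus "\<exists>R \<in> carrier_mat n m. X * R = 1\<^sub>m m" using R by blast
next
  assume "\<exists>R \<in> carrier_mat n m. X * R = 1\<^sub>m m"
  then obtain R where R: "R \<in> carrier_mat n m" and XR: "X * R = 1\<^sub>m m" by blast
  show "\<forall>y\<in>carrier_vec m. \<exists>x\<in>carrier_vec n. X *\<^sub>v x = y"
  proof
    fix y :: "complex vec" assume y: "y \<in> carrier_vec m"
    have "X *\<^sub>v (R *\<^sub>v y) = (X * R) *\<^sub>v y" using X R y by (simp add: assoc_mult_mat_vec)
    also have "\<dots> = y" using XR y by simp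
    finally show "\<exists>x\<in>carrier_vec n. X *\<^sub>v x = y" using R y by (intro bexI[of _ "R *\<^sub>v y"], auto)
  qed
qed

lemma mrank_full: fixes X :: "complex mat" assumes X: "X \<in> carrier_mat m n"
  shows "mrank X = m \<longleftrightarrow> (\<exists>R \<in> carrier_mat n m. X * R = 1\<^sub>m m)"
proof -
  interpret V: vec_space "TYPE(complex)" m .
  have "mrank X = V.rank X" unfolding mrank_def using X by simp
  hence "mrank X = m \<longleftrightarrow> V.span (set (cols X)) = carrier_vec m" using V.rank_full_span[OF X] by simp
  also have "V.span (set (cols X)) = {y \<in> carrier_vec m. \<exists>x\<in>carrier_vec n. X *\<^sub>v x = y}"
    using V.col_space_eq[OF X] X unfolding V.col_space_def by simp
  also have "\<dots> = carrier_vec m \<longleftrightarrow> (\<forall>y\<in>carrier_vec m. \<exists>x\<in>carrier_vec n. X *\<^sub>v x = y)" by auto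
  also have "\<dots> \<longleftrightarrow> (\<exists>R \<in> carrier_mat n m. X * R = 1\<^sub>m m)" by (rule surj_iff_rinv[OF X])
  finally show ?thesis .
qed



lemma col_range_sub: fixes X Y :: "complex mat"
  assumes X: "X \<in> carrier_mat p q" and Y: "Y \<in> carrier_mat p r"
  shows "col_range X \<subseteq> col_range Y \<longleftrightarrow> (\<exists>Z \<in> carrier_mat r q. X = Y * Z)"
proof
  assume s: "col_range X \<subseteq> col_range Y"
  have ex: "\<exists>w. w \<in> carrier_vec r \<and> Y *\<^sub>v w = col X j" if j: "j < q" for j
  proof -
    have "X *\<^sub>v unit_vec q j \<in> col_range X" unfolding col_range_def using X by auto
    hence "X *\<^sub>v unit_vec q j \<in> col_range Y" using s by auto
    moreover have "X *\<^sub>v unit_vec q j = col X j" using X j by (intro eq_vecI, auto)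
    ultimately show ?thesis unfolding col_range_def using Y by auto
  qed
  define c where "c = (\<lambda>j. SOME w. w \<in> carrier_vec r \<and> Y *\<^sub>v w = col X j)"
  have c: "c j \<in> carrier_vec r \<and> Y *\<^sub>v c j = col X j" if "j < q" for j
    unfolding c_def by (rule someI_ex, rule ex[OF that])
  define Z where "Z = mat r q (\<lambda>(k,j). c j $ k)"
  have Z: "Z \<in> carrier_mat r q" unfolding Z_def by simp
  have colZ: "col Z j = c j" if "j < q" for j
    unfolding Z_def using that c[OF that] by (intro eq_vecI, auto)
  have "X = Y * Z"
  proof (rule eq_matI)
    fix i j assume i: "i < dim_row (Y * Z)" and j: "j < dim_col (Y * Z)"
    hence i: "i < p" and j: "j < q" using Y Z by auto
    have "(Y * Z) $$ (i,j) = (Y *\<^sub>v col Z j) $ i" using Y Z i j by simp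
    also have "\<dots> = col X j $ i" using colZ[OF j] c[OF j] by simp
    finally show "X $$ (i,j) = (Y * Z) $$ (i,j)" using X i j by simp
  qed (use X Y Z in auto)
  thus "\<exists>Z \<in> carrier_mat r q. X = Y * Z" using Z by blast
next
  assume "\<exists>Z \<in> carrier_mat r q. X = Y * Z"
  then obtain Z where Z: "Z \<in> carrier_mat r q" and XYZ: "X = Y * Z" by blast
  show "col_range X \<subseteq> col_range Y"
  proof
    fix y assume "y \<in> col_range X"
    then obtain v where v: "v \<in> carrier_vec (dim_col X)" and y: "y = X *\<^sub>v v" unfolding col_range_def by auto
    have v': "v \<in> carrier_vec q" using v X by auto
    have "y = Y *\<^sub>v (Z *\<^sub>v v)" unfolding y XYZ using Y Z v' by (simp add: assoc_mult_mat_vec)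
    thus "y \<in> col_range Y" unfolding col_range_def using Y Z v' by auto
  qed
qed

lemma col_range_eq: fixes X Y :: "complex mat"
  assumes X: "X \<in> carrier_mat p q" and Y: "Y \<in> carrier_mat p r"
  shows "col_range X = col_range Y \<longleftrightarrow> (\<exists>Z \<in> carrier_mat r q. X = Y * Z) \<and> (\<exists>Z \<in> carrier_mat q r. Y = X * Z)"
  using col_range_sub[OF X Y] col_range_sub[OF Y X] by blast

lemma outer_nonzero: fixes A B :: "complex mat"
  assumes A: "A \<in> carrier_mat a b" and B: "B \<in> carrier_mat c d"
    and nA: "A \<noteq> 0\<^sub>m a b" and nB: "B \<noteq> 0\<^sub>m c d"
  shows "\<exists>W \<in> carrier_mat b c. A * W * B \<noteq> 0\<^sub>m a d"
proof -
  obtain i k where i: "i < a" and k: "k < b" and Aik: "A $$ (i,k) \<noteq> 0"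
    using nA A by (metis (no_types, lifting) carrier_matD eq_matI index_zero_mat(1) index_zero_mat(2) index_zero_mat(3))
  obtain l j where l: "l < c" and j: "j < d" and Blj: "B $$ (l,j) \<noteq> 0"
    using nB B by (metis (no_types, lifting) carrier_matD eq_matI index_zero_mat(1) index_zero_mat(2) index_zero_mat(3))
  define W :: "complex mat" where "W = mat b c (\<lambda>(x,y). if x = k \<and> y = l then 1 else 0)"
  have W: "W \<in> carrier_mat b c" unfolding W_def by simp
  have AW: "(A * W) $$ (i,y) = (if y = l then A $$ (i,k) else 0)" if y: "y < c" for y
  proof -
    have "(A * W) $$ (i,y) = (\<Sum>x\<in>{0..<b}. A $$ (i,x) * (if x = k \<and> y = l then 1 else 0))"
      using A W i y by (simp add: scalar_prod_def W_def)
    also have "\<dots> = (\<Sum>x\<in>{0..<b}. if x = k then (if y = l then A $$ (i,k) else 0) else 0)"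
      by (rule sum.cong, auto)
    also have "\<dots> = (if y = l then A $$ (i,k) else 0)" using k by (simp add: sum.delta)
    finally show ?thesis .
  qed
  have "(A * W * B) $$ (i,j) = (\<Sum>y\<in>{0..<c}. (A * W) $$ (i,y) * B $$ (y,j))"
    using A W B i j by (simp add: scalar_prod_def del: assoc_mult_mat)
  also have "\<dots> = (\<Sum>y\<in>{0..<c}. if y = l then A $$ (i,k) * B $$ (l,j) else 0)"
    by (rule sum.cong, auto simp: AW)
  also have "\<dots> = A $$ (i,k) * B $$ (l,j)" using l by (simp add: sum.delta)
  finally have "(A * W * B) $$ (i,j) \<noteq> 0" using Aik Blj by simp
  hence "A * W * B \<noteq> 0\<^sub>m a d" using i j by auto
  thus ?thesis using W by blast
qed

lemma add_cancel_zero: fixes A B :: "complex mat"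
  assumes "A \<in> carrier_mat p q" "B \<in> carrier_mat p q" "A + B = A"
  shows "B = 0\<^sub>m p q"
proof (rule eq_matI)
  fix i j assume ij: "i < dim_row (0\<^sub>m p q :: complex mat)" "j < dim_col (0\<^sub>m p q :: complex mat)"
  have "(A + B) $$ (i,j) = A $$ (i,j)" by (simp only: assms(3))
  hence "A $$ (i,j) + B $$ (i,j) = A $$ (i,j)" using assms(1,2) ij by simp
  thus "B $$ (i,j) = 0\<^sub>m p q $$ (i,j)" using ij by simp
qed (use assms in auto)



lemma core:
  fixes X G K Ki :: "complex mat"
  assumes X: "X \<in> carrier_mat p q" and G: "G \<in> carrier_mat q p"
    and g1: "X * G * X = X" and g3: "adj (X * G) = X * G"
    and K: "K \<in> carrier_mat p p" and Ki: "Ki \<in> carrier_mat p p" and hK: "adj K = K"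
    and KKi: "K * Ki = 1\<^sub>m p" and KiK: "Ki * K = 1\<^sub>m p"
  shows "adj X * K * X * G = adj X * K \<longleftrightarrow> col_range (K * X) = col_range X"
proof -
  define P where "P = X * G"
  have P: "P \<in> carrier_mat p p" unfolding P_def using X G by simp
  have hP: "adj P = P" unfolding P_def by (rule g3)
  have PX: "P * X = X" unfolding P_def by (rule g1)
  have aL: "adj (adj X * K * X * G) = P * K * X"
  proof -
    have "adj (adj X * K * X * G) = adj (X * G) * K * X" using X G K hK by (simp add: msimps)
    thus ?thesis unfolding P_def[symmetric] hP .
  qed
  have aR: "adj (adj X * K) = K * X" using X K hK by (simp add: msimps)
  have s1: "adj X * K * X * G = adj X * K \<longleftrightarrow> P * K * X = K * X"
    using aL aR adj_inj by metis
  have s2: "P * K * X = K * X \<longleftrightarrow> (\<exists>Z\<in>carrier_mat q q. K * X = X * Z)"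
  proof
    assume e: "P * K * X = K * X"
    have "X * (G * K * X) = P * K * X" unfolding P_def using X G K by (simp add: msimps)
    thus "\<exists>Z\<in>carrier_mat q q. K * X = X * Z" using e G K X by (intro bexI[of _ "G * K * X"], auto)
  next
    assume "\<exists>Z\<in>carrier_mat q q. K * X = X * Z"
    then obtain Z where Z: "Z \<in> carrier_mat q q" and KX: "K * X = X * Z" by blast
    have "P * K * X = P * (K * X)" using P K X by (simp add: msimps)
    also have "\<dots> = (P * X) * Z" unfolding KX using P X Z by (simp add: msimps)
    also have "\<dots> = K * X" unfolding PX KX ..
    finally show "P * K * X = K * X" .
  qed
  have s3: "\<exists>Z\<in>carrier_mat q q. X = K * X * Z" if e: "P * K * X = K * X"
  proof -
    have KP: "K * P = P * K * P"
    proof -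
      have "K * P = (K * X) * G" unfolding P_def using K X G by (simp add: msimps)
      also have "\<dots> = (P * K * X) * G" unfolding e ..
      also have "\<dots> = P * K * P" unfolding P_def using K X G by (simp add: msimps)
      finally show ?thesis .
    qed
    have PK: "P * K = K * P"
    proof -
      have "P * K = adj (K * P)" using K P hK hP by (simp add: msimps)
      also have "\<dots> = adj (P * K * P)" unfolding KP[symmetric] ..
      also have "\<dots> = P * K * P" using K P hK hP by (simp add: msimps)
      finally show ?thesis using KP by simp
    qed
    have KiP: "Ki * P = P * Ki"
    proof -
      have "Ki * P = Ki * P * (K * Ki)" unfolding KKi using Ki P by simp
      also have "\<dots> = Ki * (P * K) * Ki" using Ki P K by (simp add: msimps)
      also have "\<dots> = Ki * (K * P) * Ki" unfolding PK ..
      also have "\<dots> = (Ki * K) * P * Ki" using Ki P K by (simp add: msimps)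
      also have "\<dots> = P * Ki" unfolding KiK using P by simp
      finally show ?thesis .
    qed
    have "X = (K * Ki) * (P * X)" unfolding KKi PX using X by simp
    also have "\<dots> = K * (Ki * P) * X" using K Ki P X by (simp add: msimps)
    also have "\<dots> = K * (P * Ki) * X" unfolding KiP ..
    also have "\<dots> = K * X * (G * Ki * X)" unfolding P_def using K Ki X G by (simp add: msimps)
    finally show ?thesis using G Ki X by (intro bexI[of _ "G * Ki * X"], auto)
  qed
  have KX: "K * X \<in> carrier_mat p q" using K X by simp
  show ?thesis unfolding s1 col_range_eq[OF KX X] using s2 s3 by blast
qed


lemma madd_l: fixes A B C :: "'a::semiring_0 mat"
  assumes "dim_col A = dim_row B" "dim_row B = dim_row C" "dim_col B = dim_col C"
  shows "A * (B + C) = A * B + A * C"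
  by (rule mult_add_distrib_mat[of A "dim_row A" "dim_col A" B "dim_col B" C], insert assms, auto intro: carrier_matI)

lemma madd_r: fixes A B C :: "'a::semiring_0 mat"
  assumes "dim_col A = dim_row C" "dim_row A = dim_row B" "dim_col A = dim_col B"
  shows "(A + B) * C = A * C + B * C"
  by (rule add_mult_distrib_mat[of A "dim_row A" "dim_col A" B C "dim_col C"], insert assms, auto intro: carrier_matI)

lemma gen_e:
  fixes X T Ti :: "complex mat"
  assumes X: "X \<in> carrier_mat p q" and T: "T \<in> carrier_mat p p" and Ti: "Ti \<in> carrier_mat p p"
    and TTi: "T * Ti = 1\<^sub>m p" and TiT: "Ti * T = 1\<^sub>m p"
  shows "\<exists>G \<in> ginv_set X {1,2,4}. adj X * (adj T * T) * X * G = adj X * (adj T * T)"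
proof -
  define N where "N = T * X"
  have N: "N \<in> carrier_mat p q" unfolding N_def using T X by simp
  define Nd where "Nd = moore_penrose N"
  have "Nd \<in> ginv_set N {1,2,3,4}" unfolding Nd_def by (rule mp[OF N])
  hence Nd: "Nd \<in> carrier_mat q p" and n1: "N * Nd * N = N" and n2: "Nd * N * Nd = Nd"
    and n3: "adj (N * Nd) = N * Nd" and n4: "adj (Nd * N) = Nd * N"
    using N by (auto simp: mem_ginv_set)
  define G where "G = Nd * T"
  have G: "G \<in> carrier_mat q p" unfolding G_def using Nd T by simp
  have XN: "X = Ti * N" unfolding N_def using Ti T X TiT by (simp add: msimps[symmetric] del: assoc_mult_mat)
  have 1: "X * G * X = X"
  proof -
    have "X * G * X = X * Nd * N" unfolding G_def N_def using T X Nd by (simp add: msimps)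
    also have "\<dots> = Ti * N * Nd * N" using XN by simp
    also have "\<dots> = Ti * (N * Nd * N)" using Ti N Nd by (simp add: msimps)
    also have "\<dots> = X" using n1 XN by simp
    finally show ?thesis .
  qed
  have 2: "G * X * G = G"
  proof -
    have "G * X * G = (Nd * N * Nd) * T" unfolding G_def N_def using T X Nd by (simp add: msimps)
    thus ?thesis unfolding n2 G_def .
  qed
  have GX: "G * X = Nd * N" unfolding G_def N_def using T X Nd by (simp add: msimps)
  have 4: "adj (G * X) = G * X" unfolding GX by (rule n4)
  have "adj X * (adj T * T) * X * G = (adj N * (N * Nd)) * T" unfolding G_def N_def using T X Nd by (simp add: msimps)
  also have "adj N * (N * Nd) = adj (N * Nd * N)" using adj_mult'[of "N * Nd" N] n3 carrier_matD[OF N] carrier_matD[OF Nd] by simp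
  also have "\<dots> = adj N" unfolding n1 ..
  also have "adj N * T = adj X * (adj T * T)" unfolding N_def using T X by (simp add: msimps)
  finally have e: "adj X * (adj T * T) * X * G = adj X * (adj T * T)" .
  show ?thesis using G X 1 2 4 e by (intro bexI[of _ G], auto simp: mem_ginv_set)
qed


lemma gen_f:
  fixes X T Ti :: "complex mat" and S :: "nat set"
  assumes X: "X \<in> carrier_mat p q" and T: "T \<in> carrier_mat p p" and Ti: "Ti \<in> carrier_mat p p"
    and TTi: "T * Ti = 1\<^sub>m p" and TiT: "Ti * T = 1\<^sub>m p"
    and S1: "1 \<in> S" and S: "S \<subseteq> {1,2,4}"
  shows "(\<forall>G \<in> ginv_set X S. adj X * (adj T * T) * X * G = adj X * (adj T * T))
     \<longleftrightarrow> (X = 0\<^sub>m p q \<or> (\<exists>R \<in> carrier_mat q p. X * R = 1\<^sub>m p))"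
proof -
  define K where "K = adj T * T"
  have K: "K \<in> carrier_mat p p" unfolding K_def by (rule mult_carrier_mat[OF adj_carrier[OF T] T])
  have subg: "ginv_set X S' \<subseteq> ginv_set X S" if SS: "S \<subseteq> S'" for S'
  proof
    fix G assume a: "G \<in> ginv_set X S'"
    have c: "G \<in> carrier_mat (dim_col X) (dim_row X)" using a unfolding mem_ginv_set by (rule conjunct1)
    have pen: "\<forall>i\<in>S'. penrose i X G" using a unfolding mem_ginv_set by (rule conjunct2)
    have "\<forall>i\<in>S. penrose i X G"
    proof
      fix i assume "i \<in> S" hence "i \<in> S'" using SS by (rule subsetD[rotated])
      thus "penrose i X G" using pen by (rule bspec[rotated])
    qed
    thus "G \<in> ginv_set X S" using c by (simp only: mem_ginv_set)
  qed
  have sub: "ginv_set X {1,2,4} \<subseteq> ginv_set X S" by (rule subg[OF S])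
  have sub2: "ginv_set X {1,2,3,4} \<subseteq> ginv_set X S" by (rule subg, use S in auto)
  have mem: "G \<in> carrier_mat q p \<and> X * G * X = X" if "G \<in> ginv_set X S" for G
    using that S1 X unfolding mem_ginv_set by auto
  show ?thesis unfolding K_def[symmetric]
  proof
    assume all: "\<forall>G \<in> ginv_set X S. adj X * K * X * G = adj X * K"
    show "X = 0\<^sub>m p q \<or> (\<exists>R \<in> carrier_mat q p. X * R = 1\<^sub>m p)"
    proof (rule ccontr)
      assume "\<not> ?thesis"
      hence nX: "X \<noteq> 0\<^sub>m p q" and nR: "\<not> (\<exists>R \<in> carrier_mat q p. X * R = 1\<^sub>m p)" by auto
      define Xd where "Xd = moore_penrose X"
      have XdS: "Xd \<in> ginv_set X {1,2,3,4}" unfolding Xd_def by (rule mp[OF X])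
      hence Xd: "Xd \<in> carrier_mat q p" and x1: "X * Xd * X = X" and x2: "Xd * X * Xd = Xd"
        and x4: "adj (Xd * X) = Xd * X"
        using X by (auto simp: mem_ginv_set)
      define E where "E = 1\<^sub>m p - X * Xd"
      have E: "E \<in> carrier_mat p p" unfolding E_def using X Xd by (intro minus_carrier_mat, simp)
      have EX: "E * X = 0\<^sub>m p q"
      proof -
        have "E * X = 1\<^sub>m p * X - X * Xd * X" unfolding E_def using X Xd by (simp add: mdist_r)
        also have "\<dots> = 0\<^sub>m p q" unfolding x1 using X by simp
        finally show ?thesis .
      qed
      have nE: "E \<noteq> 0\<^sub>m p p"
      proof
        assume "E = 0\<^sub>m p p"
        hence "1\<^sub>m p - X * Xd = 0\<^sub>m p p" unfolding E_def .
        hence "1\<^sub>m p = X * Xd" using minus_zero_eq[of "1\<^sub>m p" p p "X * Xd"] X Xd by simp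
        thus False using nR Xd by auto
      qed
      define N0 where "N0 = adj X * K * X"
      have aX: "adj X \<in> carrier_mat q p" using X by simp
      have N0: "N0 \<in> carrier_mat q q" unfolding N0_def using aX X K by (simp del: adj_carrier)
      have nN0: "N0 \<noteq> 0\<^sub>m q q"
      proof
        assume z: "N0 = 0\<^sub>m q q"
        have "adj (T * X) * (T * X) = N0" unfolding N0_def K_def using T X by (simp add: msimps)
        hence "T * X = 0\<^sub>m p q" using adj_self_zero[of "T * X" p q] z T X by simp
        hence "Ti * (T * X) = 0\<^sub>m p q" using Ti by simp
        moreover have "Ti * (T * X) = X" using Ti T X TiT by (simp add: msimps[symmetric] del: assoc_mult_mat)
        ultimately show False using nX by simp
      qed
      have key: "N0 * W * E = 0\<^sub>m q p" if W: "W \<in> carrier_mat q p" for W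
      proof -
        define Y where "Y = Xd * X * W * E"
        have Y: "Y \<in> carrier_mat q p" unfolding Y_def by (rule mult_carrier_mat[OF mult_carrier_mat[OF mult_carrier_mat[OF Xd X] W] E])
        have YX: "Y * X = 0\<^sub>m q q" unfolding Y_def using Xd X W E EX by (simp add: msimps)
        define GW where "GW = Xd + Y"
        have GW: "GW \<in> carrier_mat q p" unfolding GW_def using Xd Y by simp
        have GWX: "GW * X = Xd * X" unfolding GW_def using Xd Y X YX by (simp add: madd_r)
        have g1: "X * GW * X = X"
        proof -
          have "X * GW * X = X * (GW * X)" using X GW by (simp add: msimps)
          also have "\<dots> = X" unfolding GWX using X Xd x1 by (simp add: msimps)
          finally show ?thesis .
        qed
        have g2: "GW * X * GW = GW"
        proof -
          have "GW * X * GW = Xd * X * Xd + Xd * X * Y" unfolding GWX unfolding GW_def using Xd X Y by (simp add: madd_l)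
          also have "Xd * X * Y = Xd * X * Xd * X * W * E" unfolding Y_def using Xd X W E by (simp add: msimps)
          also have "\<dots> = Y" unfolding x2 Y_def ..
          finally show ?thesis unfolding x2 GW_def .
        qed
        have g4: "adj (GW * X) = GW * X" unfolding GWX by (rule x4)
        have "GW \<in> ginv_set X {1,2,4}" using GW g1 g2 g4 X by (simp add: mem_ginv_set)
        hence GWS: "GW \<in> ginv_set X S" using sub by (rule subsetD[rotated])
        have e1: "adj X * K * X * GW = adj X * K" using all GWS by blast
        have e0: "adj X * K * X * Xd = adj X * K" using all sub2 XdS by blast
        have "adj X * K * X * GW = N0 * Xd + N0 * Y" unfolding N0_def[symmetric] GW_def using N0 Xd Y by (simp add: madd_l)
        also have "N0 * Y = N0 * W * E"
        proof -
          have "N0 * Y = adj X * K * (X * Xd * X) * W * E" unfolding Y_def N0_def using X K Xd W E by (simp add: msimps)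
          thus ?thesis unfolding x1 N0_def .
        qed
        finally have "N0 * Xd + N0 * W * E = N0 * Xd" using e1 e0 unfolding N0_def by simp
        thus ?thesis using add_cancel_zero[of "N0 * Xd" q p "N0 * W * E"] N0 Xd W E by simp
      qed
      obtain W where W: "W \<in> carrier_mat q p" and "N0 * W * E \<noteq> 0\<^sub>m q p"
        using outer_nonzero[OF N0 E nN0 nE] by blast
      thus False using key by blast
    qed
  next
    assume h: "X = 0\<^sub>m p q \<or> (\<exists>R \<in> carrier_mat q p. X * R = 1\<^sub>m p)"
    show "\<forall>G \<in> ginv_set X S. adj X * K * X * G = adj X * K"
    proof
      fix G assume "G \<in> ginv_set X S"
      hence G: "G \<in> carrier_mat q p" and g1: "X * G * X = X" using mem by auto
      from h show "adj X * K * X * G = adj X * K"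
      proof
        assume "X = 0\<^sub>m p q"
        thus ?thesis using K G by simp
      next
        assume "\<exists>R \<in> carrier_mat q p. X * R = 1\<^sub>m p"
        then obtain R where R: "R \<in> carrier_mat q p" and XR: "X * R = 1\<^sub>m p" by blast
        have XG: "X * G = 1\<^sub>m p"
        proof -
          have "X * G = X * G * (X * R)" unfolding XR using X G by simp
          also have "\<dots> = (X * G * X) * R" using X G R by (simp add: msimps)
          also have "\<dots> = 1\<^sub>m p" unfolding g1 XR ..
          finally show ?thesis .
        qed
        have "adj X * K * X * G = adj X * K * (X * G)" using X K G by (simp add: msimps)
        thus ?thesis unfolding XG using X K by simp
      qed
    qed
  qed
qed


lemma Kinv:
  fixes T Ti :: "complex mat"
  assumes T: "T \<in> carrier_mat p p" and Ti: "Ti \<in> carrier_mat p p"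
    and TTi: "T * Ti = 1\<^sub>m p" and TiT: "Ti * T = 1\<^sub>m p"
  shows "adj (adj T * T) = adj T * T" "(adj T * T) * (Ti * adj Ti) = 1\<^sub>m p"
    "(Ti * adj Ti) * (adj T * T) = 1\<^sub>m p" "Ti * adj Ti \<in> carrier_mat p p" "adj T * T \<in> carrier_mat p p"
proof -
  show "adj (adj T * T) = adj T * T" by simp
  have "(adj T * T) * (Ti * adj Ti) = adj T * (T * Ti) * adj Ti" using T Ti by (simp add: msimps)
  also have "\<dots> = adj (Ti * T)" unfolding TTi using T Ti by (simp add: msimps)
  also have "\<dots> = 1\<^sub>m p" unfolding TiT by simp
  finally show "(adj T * T) * (Ti * adj Ti) = 1\<^sub>m p" .
  have "(Ti * adj Ti) * (adj T * T) = Ti * adj (T * Ti) * T" using T Ti by (simp add: msimps)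
  also have "\<dots> = 1\<^sub>m p" unfolding TTi using T Ti TiT by simp
  finally show "(Ti * adj Ti) * (adj T * T) = 1\<^sub>m p" .
  show "Ti * adj Ti \<in> carrier_mat p p" by (rule mult_carrier_mat[OF Ti adj_carrier[OF Ti]])
  show "adj T * T \<in> carrier_mat p p" by (rule mult_carrier_mat[OF adj_carrier[OF T] T])
qed

lemma gen_g13:
  fixes X T Ti G :: "complex mat"
  assumes X: "X \<in> carrier_mat p q" and T: "T \<in> carrier_mat p p" and Ti: "Ti \<in> carrier_mat p p"
    and TTi: "T * Ti = 1\<^sub>m p" and TiT: "Ti * T = 1\<^sub>m p"
    and G: "G \<in> ginv_set X S" and S: "{1,3} \<subseteq> S"
  shows "adj X * (adj T * T) * X * G = adj X * (adj T * T) \<longleftrightarrow> col_range (adj T * T * X) = col_range X"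
proof -
  have S1: "1 \<in> S" and S3: "3 \<in> S" using S by auto
  have pen: "\<forall>i\<in>S. penrose i X G" using G unfolding mem_ginv_set by (rule conjunct2)
  have Gc: "G \<in> carrier_mat q p" using G X unfolding mem_ginv_set by auto
  have g1: "X * G * X = X" using bspec[OF pen S1] by simp
  have g3: "adj (X * G) = X * G" using bspec[OF pen S3] by simp
  note KI = Kinv[OF T Ti TTi TiT]
  show ?thesis by (rule core[OF X Gc g1 g3 KI(5) KI(4) KI(1) KI(2) KI(3)])
qed

lemma gen_g:
  fixes X T Ti :: "complex mat"
  assumes X: "X \<in> carrier_mat p q" and T: "T \<in> carrier_mat p p" and Ti: "Ti \<in> carrier_mat p p"
    and TTi: "T * Ti = 1\<^sub>m p" and TiT: "Ti * T = 1\<^sub>m p"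
    and S: "{1,3} \<subseteq> S" "S \<subseteq> {1,2,3,4}"
  shows "((\<forall>G \<in> ginv_set X S. adj X * (adj T * T) * X * G = adj X * (adj T * T))
        \<longleftrightarrow> col_range (adj T * T * X) = col_range X)
    \<and> ((\<exists>G \<in> ginv_set X S. adj X * (adj T * T) * X * G = adj X * (adj T * T))
        \<longleftrightarrow> col_range (adj T * T * X) = col_range X)"
proof -
  have "moore_penrose X \<in> ginv_set X {1,2,3,4}" by (rule mp[OF X])
  hence c: "moore_penrose X \<in> carrier_mat (dim_col X) (dim_row X)" and pen: "\<forall>i\<in>{1,2,3,4}. penrose i X (moore_penrose X)"
    unfolding mem_ginv_set by auto
  have "\<forall>i\<in>S. penrose i X (moore_penrose X)" using pen S(2) by blast
  hence mS: "moore_penrose X \<in> ginv_set X S" using c unfolding mem_ginv_set by blast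
  note e = gen_g13[OF X T Ti TTi TiT _ S(1)]
  show ?thesis using e mS by blast
qed

lemma gen_mp:
  fixes X T Ti :: "complex mat"
  assumes X: "X \<in> carrier_mat p q" and T: "T \<in> carrier_mat p p" and Ti: "Ti \<in> carrier_mat p p"
    and TTi: "T * Ti = 1\<^sub>m p" and TiT: "Ti * T = 1\<^sub>m p"
  shows "adj X * (adj T * T) * X * moore_penrose X = adj X * (adj T * T) \<longleftrightarrow> col_range (adj T * T * X) = col_range X"
  by (rule gen_g13[OF X T Ti TTi TiT mp[OF X]], auto)



lemma adj_mult_carrier[simp]: "A \<in> carrier_mat p q \<Longrightarrow> B \<in> carrier_mat p r \<Longrightarrow> adj A * B \<in> carrier_mat q r"
  by (rule mult_carrier_mat[OF adj_carrier])

lemma cancel_UV: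
  fixes U Ul V Vr Y Z :: "complex mat"
  assumes U: "U \<in> carrier_mat a a" and Ul: "Ul \<in> carrier_mat a a" and UlU: "Ul * U = 1\<^sub>m a"
    and V: "V \<in> carrier_mat b b" and Vr: "Vr \<in> carrier_mat b b" and VVr: "V * Vr = 1\<^sub>m b"
    and Y: "Y \<in> carrier_mat a b" and Z: "Z \<in> carrier_mat a b"
  shows "U * Y * V = U * Z * V \<longleftrightarrow> Y = Z"
proof
  assume e: "U * Y * V = U * Z * V"
  have "Y = (Ul * U) * Y * (V * Vr)" unfolding UlU VVr using Y by simp
  also have "\<dots> = Ul * (U * Y * V) * Vr" using U Ul V Vr Y by (simp add: msimps)
  also have "\<dots> = Ul * (U * Z * V) * Vr" unfolding e ..
  also have "\<dots> = (Ul * U) * Z * (V * Vr)" using U Ul V Vr Z by (simp add: msimps)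
  also have "\<dots> = Z" unfolding UlU VVr using Z by simp
  finally show "Y = Z" .
qed simp

lemma red1:
  fixes A Ai B C Ci G :: "complex mat"
  assumes A: "A \<in> carrier_mat m m" and Ai: "Ai \<in> carrier_mat m m" and AAi: "A * Ai = 1\<^sub>m m" and AiA: "Ai * A = 1\<^sub>m m"
    and C: "C \<in> carrier_mat n n" and Ci: "Ci \<in> carrier_mat n n" and CCi: "C * Ci = 1\<^sub>m n" and CiC: "Ci * C = 1\<^sub>m n"
    and B: "B \<in> carrier_mat m n" and G: "G \<in> carrier_mat n m"
  shows "adj (A * B * C) * (A * B * C) * Ci * G * Ai = adj (A * B * C)
     \<longleftrightarrow> adj B * (adj A * A) * B * G = adj B * (adj A * A)"
proof -
  have aA: "adj A \<in> carrier_mat m m" and aB: "adj B \<in> carrier_mat n m" and aC: "adj C \<in> carrier_mat n n"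
    and aCi: "adj Ci \<in> carrier_mat n n" using A B C Ci by auto
  have L: "adj (A * B * C) * (A * B * C) * Ci * G * Ai = adj C * (adj B * (adj A * A) * B * (C * Ci) * G) * Ai"
    using A Ai B C Ci G by (simp add: msimps)
  also have "\<dots> = adj C * (adj B * (adj A * A) * B * G) * Ai"
    unfolding CCi using A B G by (simp add: carrier_matD)
  finally have L: "adj (A * B * C) * (A * B * C) * Ci * G * Ai = adj C * (adj B * (adj A * A) * B * G) * Ai" .
  have "adj (A * B * C) = adj C * adj B * adj A * (A * Ai)" unfolding AAi using A B C by (simp add: msimps)
  also have "\<dots> = adj C * (adj B * (adj A * A)) * Ai" using A B C Ai by (simp add: msimps)
  finally have R: "adj (A * B * C) = adj C * (adj B * (adj A * A)) * Ai" .
  have UlU: "adj Ci * adj C = 1\<^sub>m n" using adj_mult'[of C Ci] CCi C Ci by simp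
  show ?thesis unfolding L unfolding R
    by (rule cancel_UV[OF aC aCi UlU Ai A AiA], insert A B G, auto)
qed


lemma red2:
  fixes A Ai B C Ci H :: "complex mat"
  assumes A: "A \<in> carrier_mat m m" and Ai: "Ai \<in> carrier_mat m m" and AAi: "A * Ai = 1\<^sub>m m" and AiA: "Ai * A = 1\<^sub>m m"
    and C: "C \<in> carrier_mat n n" and Ci: "Ci \<in> carrier_mat n n" and CCi: "C * Ci = 1\<^sub>m n" and CiC: "Ci * C = 1\<^sub>m n"
    and B: "B \<in> carrier_mat m n" and H: "H \<in> carrier_mat n m"
  shows "adj B * B * C * H * A = adj B
     \<longleftrightarrow> adj (A * B * C) * (adj Ai * Ai) * (A * B * C) * H = adj (A * B * C) * (adj Ai * Ai)"
proof -
  have aC: "adj C \<in> carrier_mat n n" and aCi: "adj Ci \<in> carrier_mat n n" using C Ci by auto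
  have f1: "adj Ci * adj C = 1\<^sub>m n" using adj_mult'[of C Ci] CCi C Ci by simp
  have f1': "adj C * adj Ci = 1\<^sub>m n" using adj_mult'[of Ci C] CiC C Ci by simp
  have f2: "adj A * adj Ai = 1\<^sub>m m" using adj_mult'[of Ai A] AiA A Ai by simp
  have "adj Ci * (adj (A * B * C) * (adj Ai * Ai) * (A * B * C) * H) * A
      = (adj Ci * adj C) * adj B * (adj A * adj Ai) * (Ai * A) * B * C * H * A"
    using A Ai B C Ci H by (simp add: msimps)
  also have "\<dots> = adj B * B * C * H * A" unfolding f1 f2 AiA using A B C H by (simp add: carrier_matD)
  finally have L: "adj B * B * C * H * A = adj Ci * (adj (A * B * C) * (adj Ai * Ai) * (A * B * C) * H) * A" by simp
  have "adj Ci * (adj (A * B * C) * (adj Ai * Ai)) * A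
      = (adj Ci * adj C) * adj B * (adj A * adj Ai) * (Ai * A)"
    using A Ai B C Ci by (simp add: msimps)
  also have "\<dots> = adj B" unfolding f1 f2 AiA using A B C by (simp add: carrier_matD)
  finally have R: "adj B = adj Ci * (adj (A * B * C) * (adj Ai * Ai)) * A" by simp
  show ?thesis unfolding L unfolding R
    by (rule cancel_UV[OF aCi aC f1' A Ai AAi], insert A B C H Ai, auto)
qed


lemma fa_conj:
  fixes U Ul V Vi Y Z :: "complex mat"
  assumes U: "U \<in> carrier_mat a a" and Ul: "Ul \<in> carrier_mat a a" and UlU: "Ul * U = 1\<^sub>m a"
    and V: "V \<in> carrier_mat b b" and Vi: "Vi \<in> carrier_mat b b" and VVi: "V * Vi = 1\<^sub>m b" and ViV: "Vi * V = 1\<^sub>m b"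
    and Y: "Y \<in> carrier_mat a b" and Z: "Z \<in> carrier_mat a b"
  shows "(\<exists>W\<in>carrier_mat b b. U * Y * V = U * Z * V * W) \<longleftrightarrow> (\<exists>W\<in>carrier_mat b b. Y = Z * W)"
proof
  assume "\<exists>W\<in>carrier_mat b b. U * Y * V = U * Z * V * W"
  then obtain W where W: "W \<in> carrier_mat b b" and e: "U * Y * V = U * Z * V * W" by blast
  have "Y = (Ul * U) * Y * (V * Vi)" unfolding UlU VVi using Y by simp
  also have "\<dots> = Ul * (U * Y * V) * Vi" using U Ul V Vi Y by (simp add: msimps)
  also have "\<dots> = Ul * (U * Z * V * W) * Vi" unfolding e ..
  also have "\<dots> = (Ul * U) * Z * (V * W * Vi)" using U Ul V Vi Z W by (simp add: msimps)
  also have "\<dots> = Z * (V * W * Vi)" unfolding UlU using Z by simp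
  finally show "\<exists>W\<in>carrier_mat b b. Y = Z * W" using V W Vi by (intro bexI[of _ "V * W * Vi"], auto)
next
  assume "\<exists>W\<in>carrier_mat b b. Y = Z * W"
  then obtain W where W: "W \<in> carrier_mat b b" and e: "Y = Z * W" by blast
  have "U * Y * V = U * Z * (V * Vi) * W * V" unfolding e VVi using U Z W by (simp add: msimps)
  also have "\<dots> = U * Z * V * (Vi * W * V)" using U Z W V Vi by (simp add: msimps)
  finally show "\<exists>W\<in>carrier_mat b b. U * Y * V = U * Z * V * W" using V W Vi by (intro bexI[of _ "Vi * W * V"], auto)
qed

lemma transfer_cond:
  fixes A Ai B C Ci :: "complex mat"
  assumes A: "A \<in> carrier_mat m m" and Ai: "Ai \<in> carrier_mat m m" and AAi: "A * Ai = 1\<^sub>m m" and AiA: "Ai * A = 1\<^sub>m m"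
    and C: "C \<in> carrier_mat n n" and Ci: "Ci \<in> carrier_mat n n" and CCi: "C * Ci = 1\<^sub>m n" and CiC: "Ci * C = 1\<^sub>m n"
    and B: "B \<in> carrier_mat m n"
  shows "col_range (adj Ai * Ai * (A * B * C)) = col_range (A * B * C) \<longleftrightarrow> col_range (adj A * A * B) = col_range B"
proof -
  define KB where "KB = adj A * A * B"
  have KB: "KB \<in> carrier_mat m n" unfolding KB_def by (rule mult_carrier_mat[OF mult_carrier_mat[OF adj_carrier[OF A] A] B])
  have aAi: "adj Ai \<in> carrier_mat m m" and aA: "adj A \<in> carrier_mat m m" using A Ai by auto
  have f: "adj A * adj Ai = 1\<^sub>m m" using adj_mult'[of Ai A] AiA A Ai by simp
  have f': "adj Ai * adj A = 1\<^sub>m m" using adj_mult'[of A Ai] AAi A Ai by simp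
  have e1: "adj Ai * Ai * (A * B * C) = adj Ai * B * C"
  proof -
    have "adj Ai * Ai * (A * B * C) = adj Ai * (Ai * A) * B * C" using A Ai B C by (simp add: msimps)
    thus ?thesis unfolding AiA using Ai B by simp
  qed
  have e2: "A * B * C = adj Ai * KB * C"
  proof -
    have "adj Ai * KB * C = (adj Ai * adj A) * A * B * C" unfolding KB_def using A Ai B C by (simp add: msimps)
    thus ?thesis unfolding f' using A by simp
  qed
  have M: "A * B * C \<in> carrier_mat m n" using A B C by simp
  have KM: "adj Ai * Ai * (A * B * C) \<in> carrier_mat m n" by (rule mult_carrier_mat[OF mult_carrier_mat[OF adj_carrier[OF Ai] Ai] M])
  have "col_range (adj Ai * Ai * (A * B * C)) = col_range (A * B * C) \<longleftrightarrow>
     (\<exists>W\<in>carrier_mat n n. adj Ai * B * C = adj Ai * KB * C * W) \<and> (\<exists>W\<in>carrier_mat n n. adj Ai * KB * C = adj Ai * B * C * W)"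
    unfolding col_range_eq[OF KM M] unfolding e1 unfolding e2 ..
  also have "\<dots> \<longleftrightarrow> (\<exists>W\<in>carrier_mat n n. B = KB * W) \<and> (\<exists>W\<in>carrier_mat n n. KB = B * W)"
    using fa_conj[OF aAi aA f C Ci CCi CiC B KB] fa_conj[OF aAi aA f C Ci CCi CiC KB B] by simp
  also have "\<dots> \<longleftrightarrow> col_range KB = col_range B" unfolding col_range_eq[OF KB B] by blast
  finally show ?thesis unfolding KB_def .
qed

lemma transfer_zero:
  fixes A Ai B C Ci :: "complex mat"
  assumes A: "A \<in> carrier_mat m m" and Ai: "Ai \<in> carrier_mat m m" and AiA: "Ai * A = 1\<^sub>m m"
    and C: "C \<in> carrier_mat n n" and Ci: "Ci \<in> carrier_mat n n" and CCi: "C * Ci = 1\<^sub>m n"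
    and B: "B \<in> carrier_mat m n"
  shows "A * B * C = 0\<^sub>m m n \<longleftrightarrow> B = 0\<^sub>m m n"
proof
  assume z: "A * B * C = 0\<^sub>m m n"
  have "B = (Ai * A) * B * (C * Ci)" unfolding AiA CCi using B by simp
  also have "\<dots> = Ai * (A * B * C) * Ci" using A Ai B C Ci by (simp add: msimps)
  also have "\<dots> = 0\<^sub>m m n" unfolding z using Ai Ci by simp
  finally show "B = 0\<^sub>m m n" .
qed (use A C in simp)

lemma transfer_rinv:
  fixes A Ai B C Ci :: "complex mat"
  assumes A: "A \<in> carrier_mat m m" and Ai: "Ai \<in> carrier_mat m m" and AAi: "A * Ai = 1\<^sub>m m" and AiA: "Ai * A = 1\<^sub>m m"
    and C: "C \<in> carrier_mat n n" and Ci: "Ci \<in> carrier_mat n n" and CCi: "C * Ci = 1\<^sub>m n"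
    and B: "B \<in> carrier_mat m n"
  shows "(\<exists>R\<in>carrier_mat n m. A * B * C * R = 1\<^sub>m m) \<longleftrightarrow> (\<exists>R\<in>carrier_mat n m. B * R = 1\<^sub>m m)"
proof
  assume "\<exists>R\<in>carrier_mat n m. A * B * C * R = 1\<^sub>m m"
  then obtain R where R: "R \<in> carrier_mat n m" and e: "A * B * C * R = 1\<^sub>m m" by blast
  have "B * (C * R * A) = (Ai * A) * B * (C * R * A)" unfolding AiA using B by simp
  also have "\<dots> = Ai * (A * B * C * R) * A" using A Ai B C R by (simp add: msimps)
  also have "\<dots> = 1\<^sub>m m" unfolding e using Ai A AiA by simp
  finally show "\<exists>R\<in>carrier_mat n m. B * R = 1\<^sub>m m" using C R A by (intro bexI[of _ "C * R * A"], auto)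
next
  assume "\<exists>R\<in>carrier_mat n m. B * R = 1\<^sub>m m"
  then obtain R where R: "R \<in> carrier_mat n m" and e: "B * R = 1\<^sub>m m" by blast
  have "A * B * C * (Ci * R * Ai) = A * B * (C * Ci) * R * Ai" using A Ai B C Ci R by (simp add: msimps)
  also have "\<dots> = A * (B * R) * Ai" unfolding CCi using A B R Ai by (simp add: msimps)
  also have "\<dots> = 1\<^sub>m m" unfolding e using A Ai AAi by simp
  finally show "\<exists>R\<in>carrier_mat n m. A * B * C * R = 1\<^sub>m m" using Ci R Ai by (intro bexI[of _ "Ci * R * Ai"], auto)
qed



lemma ball4: assumes "\<And>\<tau>. 1 \<in> \<tau> \<Longrightarrow> \<tau> \<subseteq> {1,2,4} \<Longrightarrow> P \<tau>"
  shows "\<forall>\<tau> \<in> {{1}, {1,2}, {1,4}, {1,2,4::nat}}. P \<tau>"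
  using assms by simp

lemma ball3: assumes "\<And>\<tau>. {1,3} \<subseteq> \<tau> \<Longrightarrow> \<tau> \<subseteq> {1,2,3,4} \<Longrightarrow> P \<tau>"
  shows "\<forall>\<tau> \<in> {{1,3}, {1,2,3}, {1,3,4::nat}}. P \<tau>"
  using assms by simp

lemma ginv_mono: assumes SS: "S \<subseteq> S'" shows "ginv_set X S' \<subseteq> ginv_set X S"
proof
  fix G assume a: "G \<in> ginv_set X S'"
  have c: "G \<in> carrier_mat (dim_col X) (dim_row X)" using a unfolding mem_ginv_set by (rule conjunct1)
  have pen: "\<forall>i\<in>S'. penrose i X G" using a unfolding mem_ginv_set by (rule conjunct2)
  have "\<forall>i\<in>S. penrose i X G"
  proof
    fix i assume "i \<in> S" hence "i \<in> S'" using SS by (rule subsetD[rotated])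
    thus "penrose i X G" using pen by (rule bspec[rotated])
  qed
  thus "G \<in> ginv_set X S" using c by (simp only: mem_ginv_set)
qed

lemma ginv_carrier: "G \<in> ginv_set X S \<Longrightarrow> G \<in> carrier_mat (dim_col X) (dim_row X)"
  unfolding mem_ginv_set by (rule conjunct1)


theorem lemma4p1:
  fixes A B C M :: "complex mat" and m n :: nat
  assumes A: "A \<in> carrier_mat m m" and invA: "invertible_mat A"
      and C: "C \<in> carrier_mat n n" and invC: "invertible_mat C"
      and B: "B \<in> carrier_mat m n"
      and M: "M = A * B * C"
  shows
   "(\<forall>\<tau> \<in> {{1}, {1,2}, {1,4}, {1,2,4::nat}}.
      \<exists>G \<in> ginv_set B \<tau>. mat_adjoint M * M * minv C * G * minv A = mat_adjoint M)
  \<and> (\<forall>\<tau> \<in> {{1}, {1,2}, {1,4}, {1,2,4::nat}}.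
      (\<forall>G \<in> ginv_set B \<tau>. mat_adjoint M * M * minv C * G * minv A = mat_adjoint M)
        \<longleftrightarrow> (B = 0\<^sub>m m n \<or> mrank B = m))
  \<and> (\<forall>\<tau> \<in> {{1,3}, {1,2,3}, {1,3,4::nat}}.
      ((\<forall>G \<in> ginv_set B \<tau>. mat_adjoint M * M * minv C * G * minv A = mat_adjoint M)
        \<longleftrightarrow> col_range (mat_adjoint A * A * B) = col_range B)
    \<and> ((\<exists>G \<in> ginv_set B \<tau>. mat_adjoint M * M * minv C * G * minv A = mat_adjoint M)
        \<longleftrightarrow> col_range (mat_adjoint A * A * B) = col_range B))
  \<and> ((mat_adjoint M * M * minv C * moore_penrose B * minv A = mat_adjoint M)
        \<longleftrightarrow> col_range (mat_adjoint A * A * B) = col_range B)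
  \<and> (\<forall>\<tau> \<in> {{1}, {1,2}, {1,4}, {1,2,4::nat}}.
      (\<forall>H \<in> ginv_set M \<tau>. mat_adjoint B * B * C * H * A = mat_adjoint B)
        \<longleftrightarrow> (B = 0\<^sub>m m n \<or> mrank B = m))
  \<and> (\<forall>\<tau> \<in> {{1,3}, {1,2,3}, {1,3,4::nat}}.
      (\<forall>H \<in> ginv_set M \<tau>. mat_adjoint B * B * C * H * A = mat_adjoint B)
        \<longleftrightarrow> col_range (mat_adjoint A * A * B) = col_range B)
  \<and> ((mat_adjoint B * B * C * moore_penrose M * A = mat_adjoint B)
        \<longleftrightarrow> col_range (mat_adjoint A * A * B) = col_range B)"
proof -
  note Ai = minv[OF A invA]
  note Ci = minv[OF C invC]
  define E1 where "E1 = (\<lambda>G. mat_adjoint M * M * minv C * G * minv A = mat_adjoint M)"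
  define Q1 where "Q1 = (\<lambda>G. adj B * (adj A * A) * B * G = adj B * (adj A * A))"
  have r1: "E1 G = Q1 G" if G: "G \<in> ginv_set B S" for G S
  proof -
    have Gc: "G \<in> carrier_mat n m" using ginv_carrier[OF G] B by simp
    show ?thesis unfolding E1_def Q1_def M by (rule red1[OF A Ai(1) Ai(2) Ai(3) C Ci(1) Ci(2) Ci(3) B Gc])
  qed
  have Mc: "M \<in> carrier_mat m n" unfolding M using A B C by simp
  define E2 where "E2 = (\<lambda>H. mat_adjoint B * B * C * H * A = mat_adjoint B)"
  define Q2 where "Q2 = (\<lambda>H. adj M * (adj (minv A) * minv A) * M * H = adj M * (adj (minv A) * minv A))"
  have r2: "E2 H = Q2 H" if H: "H \<in> ginv_set M S" for H S
  proof -
    have Hc: "H \<in> carrier_mat n m" using ginv_carrier[OF H] Mc by simp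
    show ?thesis unfolding E2_def Q2_def M by (rule red2[OF A Ai(1) Ai(2) Ai(3) C Ci(1) Ci(2) Ci(3) B Hc])
  qed
  have rank: "(B = 0\<^sub>m m n \<or> mrank B = m) \<longleftrightarrow> (B = 0\<^sub>m m n \<or> (\<exists>R \<in> carrier_mat n m. B * R = 1\<^sub>m m))"
    using mrank_full[OF B] by simp
  have tz: "M = 0\<^sub>m m n \<longleftrightarrow> B = 0\<^sub>m m n" unfolding M by (rule transfer_zero[OF A Ai(1) Ai(3) C Ci(1) Ci(2) B])
  have tr: "(\<exists>R\<in>carrier_mat n m. M * R = 1\<^sub>m m) \<longleftrightarrow> (\<exists>R\<in>carrier_mat n m. B * R = 1\<^sub>m m)"
    unfolding M by (rule transfer_rinv[OF A Ai(1) Ai(2) Ai(3) C Ci(1) Ci(2) B])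
  have tc: "col_range (adj (minv A) * minv A * M) = col_range M \<longleftrightarrow> col_range (adj A * A * B) = col_range B"
    unfolding M by (rule transfer_cond[OF A Ai(1) Ai(2) Ai(3) C Ci(1) Ci(2) Ci(3) B])
  have p1: "\<forall>\<tau> \<in> {{1}, {1,2}, {1,4}, {1,2,4::nat}}. \<exists>G \<in> ginv_set B \<tau>. E1 G"
  proof (rule ball4)
    fix \<tau> :: "nat set" assume "1 \<in> \<tau>" "\<tau> \<subseteq> {1,2,4}"
    obtain G where G: "G \<in> ginv_set B {1,2,4}" and q: "Q1 G"
      using gen_e[OF B A Ai(1) Ai(2) Ai(3)] unfolding Q1_def by blast
    have G': "G \<in> ginv_set B \<tau>" using ginv_mono[OF \<open>\<tau> \<subseteq> {1,2,4}\<close>] G by blast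
    show "\<exists>G \<in> ginv_set B \<tau>. E1 G" using G' q r1[OF G'] by blast
  qed
  have p2: "\<forall>\<tau> \<in> {{1}, {1,2}, {1,4}, {1,2,4::nat}}. (\<forall>G \<in> ginv_set B \<tau>. E1 G) \<longleftrightarrow> (B = 0\<^sub>m m n \<or> mrank B = m)"
  proof (rule ball4)
    fix \<tau> :: "nat set" assume t: "1 \<in> \<tau>" "\<tau> \<subseteq> {1,2,4}"
    have "(\<forall>G \<in> ginv_set B \<tau>. E1 G) \<longleftrightarrow> (\<forall>G \<in> ginv_set B \<tau>. Q1 G)" using r1 by blast
    also have "\<dots> \<longleftrightarrow> (B = 0\<^sub>m m n \<or> (\<exists>R \<in> carrier_mat n m. B * R = 1\<^sub>m m))"
      unfolding Q1_def by (rule gen_f[OF B A Ai(1) Ai(2) Ai(3) t])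
    finally show "(\<forall>G \<in> ginv_set B \<tau>. E1 G) \<longleftrightarrow> (B = 0\<^sub>m m n \<or> mrank B = m)" using rank by simp
  qed
  have p3: "\<forall>\<tau> \<in> {{1,3}, {1,2,3}, {1,3,4::nat}}.
      ((\<forall>G \<in> ginv_set B \<tau>. E1 G) \<longleftrightarrow> col_range (adj A * A * B) = col_range B)
    \<and> ((\<exists>G \<in> ginv_set B \<tau>. E1 G) \<longleftrightarrow> col_range (adj A * A * B) = col_range B)"
  proof (rule ball3)
    fix \<tau> :: "nat set" assume t: "{1,3} \<subseteq> \<tau>" "\<tau> \<subseteq> {1,2,3,4}"
    have a: "(\<forall>G \<in> ginv_set B \<tau>. E1 G) \<longleftrightarrow> (\<forall>G \<in> ginv_set B \<tau>. Q1 G)" using r1 by blast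
    have b: "(\<exists>G \<in> ginv_set B \<tau>. E1 G) \<longleftrightarrow> (\<exists>G \<in> ginv_set B \<tau>. Q1 G)" using r1 by blast
    show "((\<forall>G \<in> ginv_set B \<tau>. E1 G) \<longleftrightarrow> col_range (adj A * A * B) = col_range B)
    \<and> ((\<exists>G \<in> ginv_set B \<tau>. E1 G) \<longleftrightarrow> col_range (adj A * A * B) = col_range B)"
      unfolding a b Q1_def by (rule gen_g[OF B A Ai(1) Ai(2) Ai(3) t])
  qed
  have mpB: "moore_penrose B \<in> ginv_set B {1,2,3,4}" by (rule mp[OF B])
  have p4: "E1 (moore_penrose B) \<longleftrightarrow> col_range (adj A * A * B) = col_range B"
    unfolding r1[OF mpB] Q1_def by (rule gen_mp[OF B A Ai(1) Ai(2) Ai(3)])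
  have p5: "\<forall>\<tau> \<in> {{1}, {1,2}, {1,4}, {1,2,4::nat}}. (\<forall>H \<in> ginv_set M \<tau>. E2 H) \<longleftrightarrow> (B = 0\<^sub>m m n \<or> mrank B = m)"
  proof (rule ball4)
    fix \<tau> :: "nat set" assume t: "1 \<in> \<tau>" "\<tau> \<subseteq> {1,2,4}"
    have "(\<forall>H \<in> ginv_set M \<tau>. E2 H) \<longleftrightarrow> (\<forall>H \<in> ginv_set M \<tau>. Q2 H)" using r2 by blast
    also have "\<dots> \<longleftrightarrow> (M = 0\<^sub>m m n \<or> (\<exists>R \<in> carrier_mat n m. M * R = 1\<^sub>m m))"
      unfolding Q2_def by (rule gen_f[OF Mc Ai(1) A Ai(3) Ai(2) t])
    finally show "(\<forall>H \<in> ginv_set M \<tau>. E2 H) \<longleftrightarrow> (B = 0\<^sub>m m n \<or> mrank B = m)" using rank tz tr by simp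
  qed
  have p6: "\<forall>\<tau> \<in> {{1,3}, {1,2,3}, {1,3,4::nat}}.
      (\<forall>H \<in> ginv_set M \<tau>. E2 H) \<longleftrightarrow> col_range (adj A * A * B) = col_range B"
  proof (rule ball3)
    fix \<tau> :: "nat set" assume t: "{1,3} \<subseteq> \<tau>" "\<tau> \<subseteq> {1,2,3,4}"
    have a: "(\<forall>H \<in> ginv_set M \<tau>. E2 H) \<longleftrightarrow> (\<forall>H \<in> ginv_set M \<tau>. Q2 H)" using r2 by blast
    show "(\<forall>H \<in> ginv_set M \<tau>. E2 H) \<longleftrightarrow> col_range (adj A * A * B) = col_range B"
      unfolding a Q2_def tc[symmetric] using gen_g[OF Mc Ai(1) A Ai(3) Ai(2) t] by blast
  qed
  have mpM: "moore_penrose M \<in> ginv_set M {1,2,3,4}" by (rule mp[OF Mc])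
  have p7: "E2 (moore_penrose M) \<longleftrightarrow> col_range (adj A * A * B) = col_range B"
    unfolding r2[OF mpM] Q2_def tc[symmetric] by (rule gen_mp[OF Mc Ai(1) A Ai(3) Ai(2)])
  show ?thesis using p1 p2 p3 p4 p5 p6 p7 unfolding E1_def E2_def by blast
qed

end
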